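(* Let $q>0$, $\mu=\sqrt q$, $H$ a $d$-dimensional Hilbert space with orthonormal basis $(\psi_r)$ and $S$ as below. For all $k=1,\dots,d-1$, $(S^*\otimes1_{H^{\otimes k}})(1_{H^{\otimes k}}\otimes S)=(d-k)!_q\,k!_q\,(-\mu)^{k(d-k)}\,\varepsilon(E_k)$ as operators on $H^{\otimes k}$. Consequently, with $R_k:=\frac{1}{\mu^{k(d-k)/2}\sqrt{k!_q}\sqrt{(d-k)!_q}}S$ and $\overline R_k:=(-1)^{k(d-k)}R_k$, one has $R_k\in\varepsilon(E_{d-k})H^{\otimes(d-k)}\otimes\varepsilon(E_k)H^{\otimes k}$, $\overline R_k\in\varepsilon(E_k)H^{\otimes k}\otimes\varepsilon(E_{d-k})H^{\otimes(d-k)}$, and $(\overline R_k^*\otimes1_{H^{\otimes k}})(1_{H^{\otimes k}}\otimes R_k)=\varepsilon(E_k)$, $(R_k^*\otimes1_{H^{\otimes(d-k)}})(1_{H^{\otimes(d-k)}}\otimes\overline R_k)=\varepsilon(E_{d-k})$; thus the subobject $\varepsilon(E_{d-k})H^{\otimes(d-k)}$ is a conjugate of the subobject $\varepsilon(E_k)H^{\otimes k}$.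
   Context: $g_q$ on $H\otimes H$: $g_q\psi_i\otimes\psi_j=-\mu\psi_j\otimes\psi_i$ ($i<j$), $g_q\psi_i\otimes\psi_i=-\psi_i\otimes\psi_i$, $g_q\psi_i\otimes\psi_j=(q-1)\psi_i\otimes\psi_j-\mu\psi_j\otimes\psi_i$ ($i>j$); Jimbo–Woronowicz representation $\varepsilon(g_i)=1_{H^{\otimes(i-1)}}\otimes g_q\otimes1$ of the Hecke algebras $H_m(q)$ (generators $g_i$, braid relations, $g_i^2=(q-1)g_i+q$). $A_1=1$, $A_{m+1}=\sum_{i=0}^mg_i\cdots g_1\sigma(A_m)$, $\sigma(g_i)=g_{i+1}$, $m!_q=\prod_{j=1}^m(1+\dots+q^{j-1})$, $E_m=A_m/m!_q$. $S:=\sum_{p\in\mathbb P_d}(-\mu)^{i(p)}\psi_{p(1)}\otimes\dots\otimes\psi_{p(d)}\in H^{\otimes d}$, $i(p)$ the number of inversions, viewed as a map $\mathbb C\to H^{\otimes d}$. *)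

theory Defs
  imports Complex_Main
begin

text \<open>H has orthonormal basis psi_0,...,psi_(d-1). A vector of H^{(x)n} is a
coefficient function on index lists (basis psi_(x1) (x) ... (x) psi_(xn)); an operator
H^{(x)m} -> H^{(x)n} is a kernel K out in (matrix entry <psi_out, K psi_in>).\<close>

definition idx :: "nat \<Rightarrow> nat \<Rightarrow> nat list set" where
  "idx d n = {xs. length xs = n \<and> set xs \<subseteq> {..<d}}"

type_synonym kern = "nat list \<Rightarrow> nat list \<Rightarrow> complex"
type_synonym vec = "nat list \<Rightarrow> complex"

definition kcomp :: "nat \<Rightarrow> nat \<Rightarrow> kern \<Rightarrow> kern \<Rightarrow> kern" where
  "kcomp d m A B = (\<lambda>z x. \<Sum>y\<in>idx d m. A z y * B y x)"

text \<open>tensor product A (x) B, where A : H^{(x)m1} -> H^{(x)n1}\<close>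
definition ktens :: "nat \<Rightarrow> nat \<Rightarrow> kern \<Rightarrow> kern \<Rightarrow> kern" where
  "ktens n1 m1 A B = (\<lambda>z x. A (take n1 z) (take m1 x) * B (drop n1 z) (drop m1 x))"

definition kid :: kern where
  "kid = (\<lambda>z x. if z = x then 1 else 0)"

definition kadj :: "kern \<Rightarrow> kern" where
  "kadj A = (\<lambda>z x. cnj (A x z))"

text \<open>a vector v in H^{(x)n} viewed as the map C -> H^{(x)n}\<close>
definition vk :: "vec \<Rightarrow> kern" where
  "vk v = (\<lambda>z x. v z)"

definition kapp :: "nat \<Rightarrow> nat \<Rightarrow> kern \<Rightarrow> vec \<Rightarrow> vec" where
  "kapp d m A v = (\<lambda>z. \<Sum>x\<in>idx d m. A z x * v x)"

text \<open>g_q on H (x) H: coefficient of psi_a (x) psi_b in g_q(psi_i (x) psi_j)\<close>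
definition gq :: "real \<Rightarrow> nat \<Rightarrow> nat \<Rightarrow> nat \<Rightarrow> nat \<Rightarrow> complex" where
  "gq q a b i j =
    (let mu = complex_of_real (sqrt q) in
     if i < j then (if (a, b) = (j, i) then - mu else 0)
     else if i = j then (if (a, b) = (i, i) then -1 else 0)
     else (if (a, b) = (i, j) then complex_of_real (q - 1)
           else if (a, b) = (j, i) then - mu else 0))"

text \<open>Jimbo--Woronowicz: eps(g_i) = 1_{H^{(x)(i-1)}} (x) g_q (x) 1 on H^{(x)m}, 1 \<le> i < m\<close>
definition epsg :: "real \<Rightarrow> nat \<Rightarrow> nat \<Rightarrow> kern" where
  "epsg q m i = (\<lambda>z x.
     if (\<forall>j<m. j \<noteq> i - 1 \<and> j \<noteq> i \<longrightarrow> z ! j = x ! j)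
     then gq q (z ! (i - 1)) (z ! i) (x ! (i - 1)) (x ! i) else 0)"

fun epsw :: "nat \<Rightarrow> real \<Rightarrow> nat \<Rightarrow> nat list \<Rightarrow> kern" where
  "epsw d q m [] = kid"
| "epsw d q m (i # w) = kcomp d m (epsg q m i) (epsw d q m w)"

text \<open>A_m as a sum of words (all coefficients 1): A_1 = 1,
  A_{m+1} = sum_{i=0}^m g_i ... g_1 sigma(A_m), sigma(g_i) = g_{i+1}.
  (A_0 := 1 is an irrelevant convention.)\<close>
fun Aw :: "nat \<Rightarrow> nat list list" where
  "Aw 0 = [[]]"
| "Aw (Suc 0) = [[]]"
| "Aw (Suc (Suc m)) =
     concat (map (\<lambda>i. map (\<lambda>w. rev [1..<Suc i] @ map Suc w) (Aw (Suc m))) [0..<Suc (Suc m)])"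

definition qfact :: "real \<Rightarrow> nat \<Rightarrow> real" where
  "qfact q m = (\<Prod>j=1..m. \<Sum>i<j. q ^ i)"

definition epsA :: "nat \<Rightarrow> real \<Rightarrow> nat \<Rightarrow> kern" where
  "epsA d q m = (\<lambda>z x. sum_list (map (\<lambda>w. epsw d q m w z x) (Aw m)))"

definition epsE :: "nat \<Rightarrow> real \<Rightarrow> nat \<Rightarrow> kern" where
  "epsE d q m = (\<lambda>z x. epsA d q m z x / complex_of_real (qfact q m))"

definition inversions :: "nat list \<Rightarrow> nat" where
  "inversions xs = card {(i, j). i < j \<and> j < length xs \<and> xs ! j < xs ! i}"

definition Svec :: "nat \<Rightarrow> real \<Rightarrow> vec" where
  "Svec d q xs = (if distinct xs \<and> set xs = {..<d}
                  then (- complex_of_real (sqrt q)) ^ inversions xs else 0)"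

definition Rvec :: "nat \<Rightarrow> real \<Rightarrow> nat \<Rightarrow> vec" where
  "Rvec d q k = (\<lambda>xs. complex_of_real
      (1 / (sqrt q powr (real (k * (d - k)) / 2) * sqrt (qfact q k) * sqrt (qfact q (d - k))))
      * Svec d q xs)"

definition Rbar :: "nat \<Rightarrow> real \<Rightarrow> nat \<Rightarrow> vec" where
  "Rbar d q k = (\<lambda>xs. (-1) ^ (k * (d - k)) * Rvec d q k xs)"

end

theory Submission
  imports Defs
begin

lemma inv_Nil[simp]: "inversions [] = 0" by (simp add: inversions_def)


lemma finite_idx[simp]: "finite (idx d n)"
  unfolding idx_def using finite_lists_length_eq[of "{..<d}" n] by (simp add: conj_commute)

lemma split_filter_un: "{p\<in>A. Q p} \<union> {p\<in>A. \<not> Q p} = A" by blast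
lemma split_filter_int: "{p\<in>A. Q p} \<inter> {p\<in>A. \<not> Q p} = {}" by blast

lemma inv_Cons: "inversions (a # y) = length (filter (\<lambda>b. b < a) y) + inversions y"
proof -
  let ?P = "{(i, j). i < j \<and> j < length (a#y) \<and> (a#y) ! j < (a#y) ! i}"
  let ?Pz = "{p\<in>?P. fst p = 0}"
  let ?Po = "{p\<in>?P. fst p \<noteq> 0}"
  let ?Sz = "{j. j < length y \<and> y ! j < a}"
  let ?So = "{(i, j). i < j \<and> j < length y \<and> y ! j < y ! i}"
  have e0: "?Pz = (\<lambda>j. (0::nat, Suc j)) ` ?Sz"
  proof
    show "?Pz \<subseteq> (\<lambda>j. (0::nat, Suc j)) ` ?Sz"
    proof
      fix p assume h0: "p \<in> ?Pz"
      obtain i j where p: "p = (i, j)" by (cases p)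
      have h: "(i, j) \<in> ?Pz" using h0 p by blast
      then obtain j' where i: "i = 0" and j: "j = Suc j'" by (cases j) auto
      with h show "p \<in> (\<lambda>j. (0::nat, Suc j)) ` ?Sz" unfolding p
        by (intro image_eqI[of _ _ "j'"]) auto
    qed
  next
    show "(\<lambda>j. (0::nat, Suc j)) ` ?Sz \<subseteq> ?Pz" by auto
  qed
  have e1: "?Po = (\<lambda>(i,j). (Suc i, Suc j)) ` ?So"
  proof
    show "?Po \<subseteq> (\<lambda>(i,j). (Suc i, Suc j)) ` ?So"
    proof
      fix p assume h0: "p \<in> ?Po"
      obtain i j where p: "p = (i, j)" by (cases p)
      have h: "(i, j) \<in> ?Po" using h0 p by blast
      then obtain i' j' where i: "i = Suc i'" and j: "j = Suc j'"
        by (cases i; cases j) auto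
      with h show "p \<in> (\<lambda>(i,j). (Suc i, Suc j)) ` ?So" unfolding p
        by (intro image_eqI[of _ _ "(i', j')"]) auto
    qed
  next
    show "(\<lambda>(i,j). (Suc i, Suc j)) ` ?So \<subseteq> ?Po"
    proof
      fix p assume "p \<in> (\<lambda>(i,j). (Suc i, Suc j)) ` ?So"
      then obtain i j where "(i, j) \<in> ?So" "p = (Suc i, Suc j)" by auto
      then show "p \<in> ?Po" by simp
    qed
  qed
  have c0: "card ?Pz = length (filter (\<lambda>b. b < a) y)"
    unfolding e0 by (subst card_image) (auto simp: inj_on_def length_filter_conv_card)
  have c1: "card ?Po = inversions y"
    unfolding e1 by (subst card_image) (auto simp: inj_on_def inversions_def)
  have fP: "finite ?P"
    by (rule finite_subset[of _ "{..<length (a#y)} \<times> {..<length (a#y)}"]) auto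
  have "card (?Pz \<union> ?Po) = card ?Pz + card ?Po"
    by (rule card_Un_disjoint) (use fP in auto)
  then have "card ?P = card ?Pz + card ?Po" by (simp only: split_filter_un)
  moreover have "inversions (a#y) = card ?P" by (simp add: inversions_def)
  ultimately show ?thesis using c0 c1 by simp
qed


definition crossl :: "nat list \<Rightarrow> nat list \<Rightarrow> nat" where
  "crossl x y = sum_list (map (\<lambda>a. length (filter (\<lambda>b. b < a) y)) x)"

lemma inv_append: "inversions (x @ y) = inversions x + inversions y + crossl x y"
  by (induction x) (auto simp: inv_Cons crossl_def)

definition crs :: "nat set \<Rightarrow> nat set \<Rightarrow> nat" where
  "crs X Y = (\<Sum>a\<in>X. \<Sum>b\<in>Y. if b < a then 1 else 0)"

lemma len_filter_distinct: "distinct y \<Longrightarrow> length (filter P y) = card {b\<in>set y. P b}"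
  by (metis distinct_card distinct_filter set_filter)

lemma card_filter_sum: "finite Y \<Longrightarrow> card {b\<in>Y. P b} = (\<Sum>b\<in>Y. if P b then 1 else 0)"
  by (simp add: sum.If_cases Int_def conj_commute)

lemma crossl_crs: "distinct x \<Longrightarrow> distinct y \<Longrightarrow> crossl x y = crs (set x) (set y)"
  unfolding crossl_def crs_def
  by (simp add: sum_list_distinct_conv_sum_set len_filter_distinct card_filter_sum)

lemma aux01: "(x::nat) \<noteq> y \<Longrightarrow> (if y < x then 1 else 0) + (if x < y then 1 else 0) = (1::nat)"
  by auto

lemma crs_sym: "finite X \<Longrightarrow> finite Y \<Longrightarrow> X \<inter> Y = {} \<Longrightarrow> crs X Y + crs Y X = card X * card Y"
proof -
  assume f: "finite X" "finite Y" and dj: "X \<inter> Y = {}"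
  have "crs Y X = (\<Sum>a\<in>X. \<Sum>b\<in>Y. if a < b then 1 else 0)"
    unfolding crs_def by (rule sum.swap)
  hence "crs X Y + crs Y X = (\<Sum>a\<in>X. \<Sum>b\<in>Y. (if b < a then 1 else 0) + (if a < b then 1 else 0))"
    unfolding crs_def by (simp add: sum.distrib)
  also have "\<dots> = (\<Sum>a\<in>X. \<Sum>b\<in>Y. (1::nat))"
    by (intro sum.cong refl aux01) (use dj in blast)
  finally show ?thesis by simp
qed

definition rk :: "nat set \<Rightarrow> nat \<Rightarrow> nat" where
  "rk W a = card {w\<in>W. w < a}"

lemma rk_lt: "finite W \<Longrightarrow> e \<in> W \<Longrightarrow> rk W e < card W"
  unfolding rk_def by (rule psubset_card_mono) auto

lemma rk_mono: "finite W \<Longrightarrow> e \<in> W \<Longrightarrow> e < e' \<Longrightarrow> rk W e < rk W e'"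
  unfolding rk_def by (rule psubset_card_mono) auto

lemma rk_bij: "finite W \<Longrightarrow> bij_betw (rk W) W {..<card W}"
proof -
  assume f: "finite W"
  have inj: "inj_on (rk W) W"
    unfolding inj_on_def by (metis f linorder_neqE_nat rk_mono nat_less_le)
  have sub: "rk W ` W \<subseteq> {..<card W}" using rk_lt[OF f] by auto
  have "card (rk W ` W) = card {..<card W}" using card_image[OF inj] by simp
  hence "rk W ` W = {..<card W}" using sub by (intro card_subset_eq) auto
  thus ?thesis using inj by (simp add: bij_betw_def)
qed

lemma rk_sum: "finite W \<Longrightarrow> (\<Sum>e\<in>W. f (rk W e)) = (\<Sum>j<card W. f j)"
  using sum.reindex_bij_betw[OF rk_bij, of W f] by simp

definition mq :: "real \<Rightarrow> complex" where "mq q = - complex_of_real (sqrt q)"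

definition Om :: "real \<Rightarrow> nat set \<Rightarrow> nat list \<Rightarrow> complex" where
  "Om q W z = (if distinct z \<and> set z = W then mq q ^ inversions z else 0)"

lemma Svec_Om: "Svec d q = Om q {..<d}"
  by (rule ext) (simp add: Svec_def Om_def mq_def)

lemma Om_Nil[simp]: "Om q W [] = (if W = {} then 1 else 0)"
  by (auto simp: Om_def)

lemma rk_remove: "rk (W - {e}) e = rk W e"
  unfolding rk_def by (rule arg_cong[where f=card]) auto

lemma Om_Cons: "Om q W (e # u) = (if e \<in> W then mq q ^ rk W e * Om q (W - {e}) u else 0)"
proof (cases "e \<in> W \<and> distinct u \<and> set u = W - {e}")
  case True
  then have "{b\<in>set u. b < e} = {w\<in>W. w < e}" by auto
  with True have "length (filter (\<lambda>b. b < e) u) = rk W e"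
    by (simp add: len_filter_distinct rk_def)
  with True show ?thesis
    by (auto simp: Om_def inv_Cons power_add)
next
  case False
  then show ?thesis by (auto simp: Om_def)
qed

lemma mq_sq: "q \<ge> 0 \<Longrightarrow> mq q * mq q = complex_of_real q"
  unfolding mq_def by (simp flip: of_real_mult)

lemma mq_pow_sq: "q \<ge> 0 \<Longrightarrow> mq q ^ n * mq q ^ n = complex_of_real q ^ n"
  by (metis mq_sq power_mult_distrib)

lemma idx_0[simp]: "idx d 0 = {[]}"
  by (auto simp: idx_def)

lemma idx_Suc: "idx d (Suc n) = (\<lambda>(c, y). c # y) ` ({..<d} \<times> idx d n)"
proof
  show "idx d (Suc n) \<subseteq> (\<lambda>(c, y). c # y) ` ({..<d} \<times> idx d n)"
  proof
    fix x assume x: "x \<in> idx d (Suc n)"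
    then obtain c y where "x = c # y" by (cases x) (auto simp: idx_def)
    with x show "x \<in> (\<lambda>(c, y). c # y) ` ({..<d} \<times> idx d n)"
      by (intro image_eqI[of _ _ "(c, y)"]) (auto simp: idx_def)
  qed
qed (auto simp: idx_def)

lemma sum_idx_Suc: "(\<Sum>x\<in>idx d (Suc n). f x) = (\<Sum>c<d. \<Sum>y\<in>idx d n. f (c # y))"
proof -
  have "inj_on (\<lambda>(c, y). c # y) ({..<d} \<times> idx d n)" by (auto simp: inj_on_def)
  then have "(\<Sum>x\<in>idx d (Suc n). f x) = (\<Sum>p\<in>{..<d} \<times> idx d n. f (fst p # snd p))"
    unfolding idx_Suc by (subst sum.reindex) (auto simp: case_prod_beta)
  also have "\<dots> = (\<Sum>c<d. \<Sum>y\<in>idx d n. f (c # y))"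
    unfolding sum.cartesian_product by (simp add: case_prod_beta)
  finally show ?thesis .
qed

lemma sum_idx_append: "(\<Sum>x\<in>idx d (a + b). f x) = (\<Sum>x\<in>idx d a. \<Sum>y\<in>idx d b. f (x @ y))"
proof (induction a arbitrary: f)
  case 0 then show ?case by simp
next
  case (Suc a)
  have "(\<Sum>x\<in>idx d (Suc a + b). f x) = (\<Sum>c<d. \<Sum>y\<in>idx d (a + b). f (c # y))"
    by (simp add: sum_idx_Suc)
  also have "\<dots> = (\<Sum>c<d. \<Sum>x\<in>idx d a. \<Sum>y\<in>idx d b. f (c # x @ y))"
    using Suc.IH by simp
  also have "\<dots> = (\<Sum>x\<in>idx d (Suc a). \<Sum>y\<in>idx d b. f (x @ y))"
    by (simp add: sum_idx_Suc)
  finally show ?case .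
qed

lemma qfact_0[simp]: "qfact q 0 = 1" by (simp add: qfact_def)

lemma qfact_Suc: "qfact q (Suc n) = qfact q n * (\<Sum>i<Suc n. q ^ i)"
  unfolding qfact_def by (simp add: prod.nat_ivl_Suc')

lemma qfact_pos: "q > 0 \<Longrightarrow> qfact q n > 0"
  unfolding qfact_def
  by (intro prod_pos) (auto intro!: sum_pos simp: lessThan_empty_iff)

lemma perm_sum:
  assumes "q \<ge> 0"
  shows "C \<subseteq> {..<d} \<Longrightarrow> card C = n \<Longrightarrow>
     (\<Sum>y\<in>idx d n. Om q C y * Om q C y) = complex_of_real (qfact q n)"
proof (induction n arbitrary: C)
  case 0
  then have "C = {}" using finite_subset[OF 0(1)] by auto
  then show ?case by simp
next
  case (Suc n)
  have fC: "finite C" using finite_subset[OF Suc.prems(1)] by auto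
  have "(\<Sum>y\<in>idx d (Suc n). Om q C y * Om q C y)
      = (\<Sum>c<d. if c \<in> C then complex_of_real q ^ rk C c * complex_of_real (qfact q n) else 0)"
  proof (simp only: sum_idx_Suc, intro sum.cong refl)
    fix c assume "c \<in> {..<d}"
    show "(\<Sum>y\<in>idx d n. Om q C (c # y) * Om q C (c # y))
        = (if c \<in> C then complex_of_real q ^ rk C c * complex_of_real (qfact q n) else 0)"
    proof (cases "c \<in> C")
      case True
      have "(\<Sum>y\<in>idx d n. Om q C (c # y) * Om q C (c # y))
          = (\<Sum>y\<in>idx d n. (mq q ^ rk C c * mq q ^ rk C c) * (Om q (C - {c}) y * Om q (C - {c}) y))"
        using True by (simp add: Om_Cons algebra_simps)
      also have "\<dots> = complex_of_real q ^ rk C c * complex_of_real (qfact q n)"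
      proof -
        have ih: "(\<Sum>y\<in>idx d n. Om q (C - {c}) y * Om q (C - {c}) y) = complex_of_real (qfact q n)"
          using Suc.IH[of "C - {c}"] Suc.prems True fC by auto
        show ?thesis by (simp add: mq_pow_sq[OF assms] sum_distrib_left[symmetric] ih)
      qed
      finally show ?thesis using True by simp
    qed (simp add: Om_Cons)
  qed
  also have "\<dots> = (\<Sum>c\<in>C. complex_of_real q ^ rk C c) * complex_of_real (qfact q n)"
    using Suc.prems(1) by (simp add: sum.If_cases sum_distrib_right Int_absorb1)
  also have "\<dots> = (\<Sum>j<Suc n. complex_of_real q ^ j) * complex_of_real (qfact q n)"
    using rk_sum[OF fC, of "\<lambda>j. complex_of_real q ^ j"] Suc.prems by simp
  also have "\<dots> = complex_of_real (qfact q (Suc n))"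
    by (simp add: qfact_Suc)
  finally show ?case .
qed

lemma if_mult0: "(if P then a else 0) * (b::complex) = (if P then a * b else 0)" by simp
lemma sum_if_out: "(\<Sum>y\<in>A. if P then f y else 0) = (if P then (\<Sum>y\<in>A. f y) else 0)" by simp

lemma kapp_kid: "z \<in> idx d m \<Longrightarrow> kapp d m kid v z = v z"
  unfolding kapp_def kid_def by (simp add: if_mult0 sum.delta)

lemma kapp_kcomp: "kapp d m (kcomp d m A B) v z = kapp d m A (kapp d m B v) z"
  unfolding kapp_def kcomp_def
  by (simp add: sum_distrib_left sum_distrib_right mult.assoc) (rule sum.swap)

lemma kapp_cong: "(\<And>x. x \<in> idx d m \<Longrightarrow> v x = v' x) \<Longrightarrow> kapp d m A v z = kapp d m A v' z"
  unfolding kapp_def by (intro sum.cong refl) simp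

lemma kapp_sum: "kapp d m A (\<lambda>x. \<Sum>i\<in>I. f i x) z = (\<Sum>i\<in>I. kapp d m A (f i) z)"
  unfolding kapp_def by (simp add: sum_distrib_left) (rule sum.swap)

lemma kapp_smult: "kapp d m A (\<lambda>x. c * v x) z = c * kapp d m A v z"
  unfolding kapp_def by (simp add: sum_distrib_left algebra_simps)

definition ap :: "nat \<Rightarrow> real \<Rightarrow> nat \<Rightarrow> nat list \<Rightarrow> vec \<Rightarrow> vec" where
  "ap d q m w v = foldr (\<lambda>i u. kapp d m (epsg q m i) u) w v"

lemma ap_Nil[simp]: "ap d q m [] v = v" by (simp add: ap_def)
lemma ap_Cons: "ap d q m (i # w) v = kapp d m (epsg q m i) (ap d q m w v)" by (simp add: ap_def)
lemma ap_append: "ap d q m (u @ w) v = ap d q m u (ap d q m w v)" by (simp add: ap_def)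

lemma ap_cong: "z \<in> idx d m \<Longrightarrow> (\<And>x. x \<in> idx d m \<Longrightarrow> v x = v' x) \<Longrightarrow> ap d q m w v z = ap d q m w v' z"
proof (induction w arbitrary: z)
  case Nil then show ?case by simp
next
  case (Cons i w) then show ?case by (auto simp: ap_Cons intro!: kapp_cong)
qed

lemma kapp_epsw: "z \<in> idx d m \<Longrightarrow> kapp d m (epsw d q m w) v z = ap d q m w v z"
proof (induction w arbitrary: z)
  case Nil then show ?case by (simp add: kapp_kid)
next
  case (Cons i w) then show ?case by (auto simp: ap_Cons kapp_kcomp intro!: kapp_cong)
qed

lemma ap_sum: "ap d q m w (\<lambda>x. \<Sum>i\<in>I. f i x) = (\<lambda>z. \<Sum>i\<in>I. ap d q m w (f i) z)"
proof (induction w)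
  case Nil then show ?case by simp
next
  case (Cons j w) then show ?case by (simp add: ap_Cons kapp_sum)
qed

lemma ap_smult: "ap d q m w (\<lambda>x. c * v x) = (\<lambda>z. c * ap d q m w v z)"
proof (induction w)
  case Nil then show ?case by simp
next
  case (Cons j w) then show ?case by (simp add: ap_Cons kapp_smult)
qed

lemma epsg_shift:
  assumes "1 \<le> i" "length z' = m" "length y = m"
  shows "epsg q (Suc m) (Suc i) (z0 # z') (c # y) = (if c = z0 then epsg q m i z' y else 0)"
proof -
  obtain i' where i: "i = Suc i'" using assms(1) by (cases i) auto
  have "(\<forall>j<Suc m. j \<noteq> Suc i - 1 \<and> j \<noteq> Suc i \<longrightarrow> (z0 # z') ! j = (c # y) ! j)
     = (z0 = c \<and> (\<forall>j<m. j \<noteq> i - 1 \<and> j \<noteq> i \<longrightarrow> z' ! j = y ! j))"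
    unfolding i by (simp add: All_less_Suc2)
  then show ?thesis unfolding epsg_def i by auto
qed

lemma kapp_shift:
  assumes "1 \<le> i" "z \<in> idx d (Suc m)"
  shows "kapp d (Suc m) (epsg q (Suc m) (Suc i)) v z = kapp d m (epsg q m i) (\<lambda>y. v (hd z # y)) (tl z)"
proof -
  obtain z0 z' where z: "z = z0 # z'" "z0 < d" "z' \<in> idx d m"
    using assms(2) by (cases z) (auto simp: idx_def)
  have "kapp d (Suc m) (epsg q (Suc m) (Suc i)) v z
      = (\<Sum>c<d. \<Sum>y\<in>idx d m. (if c = z0 then epsg q m i z' y else 0) * v (c # y))"
    unfolding kapp_def sum_idx_Suc z(1)
    using z(3) assms(1) by (intro sum.cong refl) (simp add: epsg_shift idx_def)
  also have "\<dots> = (\<Sum>y\<in>idx d m. epsg q m i z' y * v (z0 # y))"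
    using z(2) by (simp add: if_mult0 sum_if_out sum.delta')
  finally show ?thesis unfolding kapp_def z(1) by simp
qed

lemma ap_shift:
  "set w \<subseteq> {1..} \<Longrightarrow> z \<in> idx d (Suc m) \<Longrightarrow>
   ap d q (Suc m) (map Suc w) v z = ap d q m w (\<lambda>y. v (hd z # y)) (tl z)"
proof (induction w arbitrary: z)
  case Nil then show ?case by (cases z) (auto simp: idx_def)
next
  case (Cons i w)
  have "ap d q (Suc m) (map Suc (i # w)) v z
      = kapp d m (epsg q m i) (\<lambda>y. ap d q (Suc m) (map Suc w) v (hd z # y)) (tl z)"
    using Cons.prems by (simp add: ap_Cons kapp_shift)
  also have "\<dots> = kapp d m (epsg q m i) (ap d q m w (\<lambda>y. v (hd z # y))) (tl z)"
  proof (rule kapp_cong)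
    fix y assume y: "y \<in> idx d m"
    have "hd z # y \<in> idx d (Suc m)" using y Cons.prems(2) by (cases z) (auto simp: idx_def)
    then show "ap d q (Suc m) (map Suc w) v (hd z # y) = ap d q m w (\<lambda>y. v (hd z # y)) y"
      using Cons.IH[of "hd z # y"] Cons.prems(1) by simp
  qed
  finally show ?case by (simp add: ap_Cons)
qed

lemma kapp_g1:
  assumes "z \<in> idx d (Suc (Suc n))"
  shows "kapp d (Suc (Suc n)) (epsg q (Suc (Suc n)) 1) v z
       = (\<Sum>a<d. \<Sum>e<d. gq q (z ! 0) (z ! 1) a e * v (a # e # drop 2 z))"
proof -
  obtain z0 z1 t where z: "z = z0 # z1 # t" "t \<in> idx d n"
    using assms by (cases z; cases "tl z") (auto simp: idx_def)
  have eg: "epsg q (Suc (Suc n)) (Suc 0) (z0 # z1 # t) (a # e # y) = (if y = t then gq q z0 z1 a e else 0)"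
    if "y \<in> idx d n" for a e y
  proof -
    have "(\<forall>j<Suc (Suc n). j \<noteq> Suc 0 - 1 \<and> j \<noteq> Suc 0 \<longrightarrow> (z0 # z1 # t) ! j = (a # e # y) ! j) = (y = t)"
      using that z(2) by (auto simp: All_less_Suc2 idx_def intro: nth_equalityI)
    then show ?thesis unfolding epsg_def by simp
  qed
  show ?thesis
    unfolding kapp_def sum_idx_Suc z(1) using z(2)
    by (simp add: eg if_mult0 sum.delta')
qed

definition psiT :: "nat \<Rightarrow> vec \<Rightarrow> vec" where
  "psiT a u = (\<lambda>y. case y of [] \<Rightarrow> 0 | b # t \<Rightarrow> if b = a then u t else 0)"

lemma psiT_Cons[simp]: "psiT a u (b # t) = (if b = a then u t else 0)"
  by (simp add: psiT_def)

definition Gs :: "nat \<Rightarrow> real \<Rightarrow> nat \<Rightarrow> vec \<Rightarrow> vec" where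
  "Gs d q n v z = (\<Sum>i\<le>n. ap d q (Suc n) (rev [1..<Suc i]) v z)"

lemma Gs_cong: "z \<in> idx d (Suc n) \<Longrightarrow> (\<And>y. y \<in> idx d (Suc n) \<Longrightarrow> v y = v' y) \<Longrightarrow> Gs d q n v z = Gs d q n v' z"
  unfolding Gs_def by (intro sum.cong refl ap_cong) auto

lemma Gs_sum: "Gs d q n (\<lambda>y. \<Sum>i\<in>I. f i y) z = (\<Sum>i\<in>I. Gs d q n (f i) z)"
  unfolding Gs_def ap_sum by (rule sum.swap)

lemma Gs_smult: "Gs d q n (\<lambda>y. c * f y) z = c * Gs d q n f z"
  unfolding Gs_def ap_smult by (simp add: sum_distrib_left)

lemma rev_upt_Suc: "rev [1..<Suc (Suc i)] = map Suc (rev [1..<Suc i]) @ [1]"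
proof -
  have "[1..<Suc (Suc i)] = 1 # map Suc [1..<Suc i]"
    by (simp add: upt_conv_Cons map_Suc_upt del: upt_Suc)
  then show ?thesis by (simp add: rev_map)
qed

lemma Gs_Suc:
  assumes "z \<in> idx d (Suc (Suc n))"
  shows "Gs d q (Suc n) v z
    = v z + Gs d q n (\<lambda>y. kapp d (Suc (Suc n)) (epsg q (Suc (Suc n)) 1) v (hd z # y)) (tl z)"
proof -
  have "ap d q (Suc (Suc n)) (rev [1..<Suc (Suc i)]) v z
      = ap d q (Suc n) (rev [1..<Suc i]) (\<lambda>y. kapp d (Suc (Suc n)) (epsg q (Suc (Suc n)) 1) v (hd z # y)) (tl z)"
    for i
    unfolding rev_upt_Suc ap_append
    by (subst ap_shift) (use assms in \<open>auto simp: ap_Cons\<close>)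
  moreover have "(\<Sum>i\<le>Suc n. ap d q (Suc (Suc n)) (rev [1..<Suc i]) v z)
     = ap d q (Suc (Suc n)) (rev [1..<Suc 0]) v z + (\<Sum>i\<le>n. ap d q (Suc (Suc n)) (rev [1..<Suc (Suc i)]) v z)"
    by (rule sum.atMost_Suc_shift)
  ultimately show ?thesis
    unfolding Gs_def by simp
qed

lemma sum_delta_mult: "(a::nat) < d \<Longrightarrow> (\<Sum>f<d. (if f = a then K else 0) * Y f) = (K::complex) * Y a"
  unfolding if_mult0 by (subst sum.delta) auto

lemma gq_sum:
  assumes "a < d" "e < d"
  shows "(\<Sum>f<d. gq q c f a e * Y f) =
    (if a < e then (if c = e then mq q * Y a else 0)
     else if a = e then (if c = a then - Y a else 0)
     else (if c = a then complex_of_real (q - 1) * Y e else 0) + (if c = e then mq q * Y a else 0))"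
proof -
  consider "a < e" | "a = e" | "e < a" by linarith
  then show ?thesis
  proof cases
    case 1
    then have "gq q c f a e = (if f = a then (if c = e then mq q else 0) else 0)" for f
      by (auto simp: gq_def Let_def mq_def)
    then show ?thesis using 1 assms by (simp add: sum_delta_mult)
  next
    case 2
    then have "gq q c f a e = (if f = a then (if c = a then -1 else 0) else 0)" for f
      by (auto simp: gq_def Let_def mq_def)
    then show ?thesis using 2 assms by (simp add: sum_delta_mult)
  next
    case 3
    then have "gq q c f a e = (if f = e then (if c = a then complex_of_real (q - 1) else 0) else 0)
       + (if f = a then (if c = e then mq q else 0) else 0)" for f
      by (auto simp: gq_def Let_def mq_def)
    then show ?thesis using 3 assms by (simp add: sum_delta_mult distrib_right sum.distrib)
  qed
qed

lemma rk_insert_self: "rk (insert a W) a = rk W a"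
  unfolding rk_def by (rule arg_cong[where f=card]) auto

lemma rk_insert_lt: "c < a \<Longrightarrow> rk (insert a W) c = rk W c"
  unfolding rk_def by (rule arg_cong[where f=card]) auto

lemma rk_insert_gt: "finite W \<Longrightarrow> a \<notin> W \<Longrightarrow> a < c \<Longrightarrow> rk (insert a W) c = Suc (rk W c)"
proof -
  assume "finite W" "a \<notin> W" "a < c"
  then have "{w \<in> insert a W. w < c} = insert a {w\<in>W. w < c}" "a \<notin> {w\<in>W. w < c}" "finite {w\<in>W. w < c}"
    by auto
  then show ?thesis unfolding rk_def by simp
qed

lemma rk_remove_lt: "finite W \<Longrightarrow> c \<in> W \<Longrightarrow> c < a \<Longrightarrow> rk W a = Suc (rk (W - {c}) a)"
proof -
  assume "finite W" "c \<in> W" "c < a"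
  then have "{w \<in> W. w < a} = insert c {w\<in>W - {c}. w < a}" "c \<notin> {w\<in>W - {c}. w < a}" "finite {w\<in>W - {c}. w < a}"
    by auto
  then show ?thesis unfolding rk_def by simp
qed

lemma rk_remove_gt: "a < c \<Longrightarrow> rk (W - {c}) a = rk W a"
  unfolding rk_def by (rule arg_cong[where f=card]) auto

lemma rk_geo:
  assumes "finite W"
  shows "((Q::complex) - 1) * (\<Sum>e\<in>{e\<in>W. e < a}. Q ^ rk W e) = Q ^ rk W a - 1"
proof -
  let ?W = "{e\<in>W. e < a}"
  have fW: "finite ?W" using assms by auto
  have "(\<Sum>e\<in>?W. Q ^ rk W e) = (\<Sum>e\<in>?W. Q ^ rk ?W e)"
  proof (intro sum.cong refl)
    fix e assume "e \<in> ?W"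
    then have "rk W e = rk ?W e" unfolding rk_def by (intro arg_cong[where f=card]) auto
    then show "Q ^ rk W e = Q ^ rk ?W e" by simp
  qed
  also have "\<dots> = (\<Sum>j<card ?W. Q ^ j)" by (rule rk_sum[OF fW])
  finally show ?thesis by (simp add: rk_def power_diff_1_eq)
qed

lemma final_id:
  assumes q: "q \<ge> 0" and fW: "finite W" and Wd: "W \<subseteq> {..<d}" and ad: "a < d"
    and X: "\<And>e f. X e f = (if f \<in> W - {e} then 0 else mq q ^ rk (W - {e}) f * Om q (insert f (W - {e})) t)"
  shows "(if c = a then Om q W t else 0) + (\<Sum>e\<in>W. mq q ^ rk W e * (\<Sum>f<d. gq q c f a e * X e f))
       = (if a \<in> W then 0 else mq q ^ rk W a * Om q (insert a W) (c # t))"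
proof -
  let ?Q = "complex_of_real q"
  have Xee: "e \<in> W \<Longrightarrow> X e e = mq q ^ rk W e * Om q W t" for e
    using X[of e e] by (simp add: rk_remove insert_absorb)
  have gs: "e \<in> W \<Longrightarrow> (\<Sum>f<d. gq q c f a e * X e f) =
    (if a < e then (if c = e then mq q * X e a else 0)
     else if a = e then (if c = a then - X e a else 0)
     else (if c = a then (?Q - 1) * X e e else 0) + (if c = e then mq q * X e a else 0))" for e
    using gq_sum[OF ad, of e q c "X e"] Wd by auto
  show ?thesis
  proof (cases "c = a")
    case True
    have tm: "mq q ^ rk W e * (\<Sum>f<d. gq q c f a e * X e f)
       = (if e < a then (?Q - 1) * (?Q ^ rk W e) * Om q W t else 0)
         + (if e = a then - (?Q ^ rk W a) * Om q W t else 0)" if e: "e \<in> W" for e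
    proof -
      consider "a < e" | "a = e" | "e < a" by linarith
      then show ?thesis
      proof cases
        case 1 then show ?thesis using gs[OF e] True by auto
      next
        case 2 then show ?thesis using gs[OF e] True Xee[OF e]
          by (simp add: mult.assoc[symmetric] mq_pow_sq[OF q])
      next
        case 3
        then have hS: "(\<Sum>f<d. gq q c f a e * X e f) = (?Q - 1) * (mq q ^ rk W e * Om q W t)"
          using gs[OF e] True Xee[OF e] by simp
        have "mq q ^ rk W e * (\<Sum>f<d. gq q c f a e * X e f)
            = (?Q - 1) * (mq q ^ rk W e * mq q ^ rk W e) * Om q W t"
          by (simp only: hS) (simp add: algebra_simps)
        then show ?thesis using 3 by (simp add: mq_pow_sq[OF q])
      qed
    qed
    have "(\<Sum>e\<in>W. mq q ^ rk W e * (\<Sum>f<d. gq q c f a e * X e f))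
       = (\<Sum>e\<in>W. (if e < a then (?Q - 1) * (?Q ^ rk W e) * Om q W t else 0))
         + (\<Sum>e\<in>W. (if e = a then - (?Q ^ rk W a) * Om q W t else 0))"
      using tm by (simp add: sum.distrib)
    also have "\<dots> = (?Q - 1) * (\<Sum>e\<in>{e\<in>W. e < a}. ?Q ^ rk W e) * Om q W t
         + (if a \<in> W then - (?Q ^ rk W a) * Om q W t else 0)"
      using fW by (simp add: sum.If_cases sum.inter_filter sum_distrib_left sum_distrib_right algebra_simps)
    also have "\<dots> = (?Q ^ rk W a - 1) * Om q W t + (if a \<in> W then - (?Q ^ rk W a) * Om q W t else 0)"
      by (simp add: rk_geo[OF fW])
    finally have S: "(\<Sum>e\<in>W. mq q ^ rk W e * (\<Sum>f<d. gq q c f a e * X e f))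
        = (?Q ^ rk W a - 1) * Om q W t + (if a \<in> W then - (?Q ^ rk W a) * Om q W t else 0)" .
    show ?thesis
    proof (cases "a \<in> W")
      case True
      then show ?thesis using S \<open>c = a\<close> by (simp add: algebra_simps)
    next
      case False
      have "mq q ^ rk W a * Om q (insert a W) (c # t) = ?Q ^ rk W a * Om q W t"
        using False \<open>c = a\<close>
        by (simp add: Om_Cons rk_insert_self mq_pow_sq[OF q] mult.assoc[symmetric])
      then show ?thesis using S False \<open>c = a\<close> by (simp add: algebra_simps)
    qed
  next
    case False
    have tm: "mq q ^ rk W e * (\<Sum>f<d. gq q c f a e * X e f)
       = (if e = c then mq q ^ rk W c * (mq q * X c a) else 0)" if e: "e \<in> W" for e
      using gs[OF e] False by auto
    have S: "(\<Sum>e\<in>W. mq q ^ rk W e * (\<Sum>f<d. gq q c f a e * X e f))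
       = (if c \<in> W then mq q ^ rk W c * (mq q * X c a) else 0)"
      using fW by (simp add: tm sum.delta)
    show ?thesis
    proof (cases "a \<in> W")
      case True
      then show ?thesis using S False X[of c a] by simp
    next
      case aW: False
      show ?thesis
      proof (cases "c \<in> W")
        case cW: True
        have ins: "insert a (W - {c}) = insert a W - {c}" using False by auto
        have exps: "rk W c + 1 + rk (W - {c}) a = rk W a + rk (insert a W) c"
        proof (cases "c < a")
          case True
          then show ?thesis using rk_remove_lt[OF fW cW True] rk_insert_lt[OF True] by simp
        next
          case False
          then have "a < c" using \<open>c \<noteq> a\<close> by simp
          then show ?thesis using rk_remove_gt[of a c W] rk_insert_gt[OF fW aW] by simp
        qed
        have "mq q ^ rk W c * (mq q * X c a)
            = mq q ^ (rk W c + 1 + rk (W - {c}) a) * Om q (insert a W - {c}) t"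
          using X[of c a] aW ins by (simp add: power_add)
        also have "\<dots> = mq q ^ (rk W a + rk (insert a W) c) * Om q (insert a W - {c}) t"
          by (simp only: exps)
        also have "\<dots> = mq q ^ rk W a * Om q (insert a W) (c # t)"
          using cW by (simp add: Om_Cons power_add)
        finally show ?thesis using S False aW cW by simp
      next
        case cW: False
        then show ?thesis using S False aW by (simp add: Om_Cons)
      qed
    qed
  qed
qed

lemma mult_if0': "(b::complex) * (if P then a else 0) = (if P then b * a else 0)" by simp

lemma GL:
  assumes q: "q \<ge> 0"
  shows "a < d \<Longrightarrow> W \<subseteq> {..<d} \<Longrightarrow> card W = n \<Longrightarrow> z \<in> idx d (Suc n) \<Longrightarrow>
    Gs d q n (psiT a (Om q W)) z = (if a \<in> W then 0 else mq q ^ rk W a * Om q (insert a W) z)"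
proof (induction n arbitrary: a W z)
  case 0
  then have W: "W = {}" using finite_subset[OF 0(2)] by auto
  obtain c where z: "z = [c]" using 0(4) by (cases z) (auto simp: idx_def)
  have e: "{w. w = a \<and> w < a} = {}" by auto
  show ?case unfolding Gs_def using W z by (simp add: Om_Cons rk_def e)
next
  case (Suc n)
  have fW: "finite W" using finite_subset[OF Suc.prems(2)] by auto
  obtain c t where z: "z = c # t" "c < d" "t \<in> idx d (Suc n)"
    using Suc.prems(4) by (cases z) (auto simp: idx_def)
  let ?v = "psiT a (Om q W)"
  let ?g = "\<lambda>y. kapp d (Suc (Suc n)) (epsg q (Suc (Suc n)) 1) ?v (hd z # y)"
  define h where "h y = (\<Sum>e\<in>W. \<Sum>f<d. (mq q ^ rk W e * gq q c f a e) * psiT f (Om q (W - {e})) y)" for y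
  define X where "X e f = (if f \<in> W - {e} then 0 else mq q ^ rk (W - {e}) f * Om q (insert f (W - {e})) t)" for e f
  have hy: "?g y = h y" if y: "y \<in> idx d (Suc n)" for y
  proof -
    obtain y0 y' where yy: "y = y0 # y'" "y0 < d" using y by (cases y) (auto simp: idx_def)
    have cy: "c # y \<in> idx d (Suc (Suc n))" using y z(2) by (auto simp: idx_def)
    have "?g y = (\<Sum>a'<d. \<Sum>e<d. gq q c y0 a' e * ?v (a' # e # y'))"
      using kapp_g1[OF cy, of q ?v] z(1) yy by simp
    also have "\<dots> = (\<Sum>a'<d. if a' = a then (\<Sum>e<d. gq q c y0 a e * Om q W (e # y')) else 0)"
      by (intro sum.cong refl) (simp only: psiT_Cons mult_if0' sum_if_out, simp)
    also have "\<dots> = (\<Sum>e<d. gq q c y0 a e * Om q W (e # y'))"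
      using Suc.prems(1) by (subst sum.delta) auto
    also have "\<dots> = (\<Sum>e<d. if e \<in> W then gq q c y0 a e * (mq q ^ rk W e * Om q (W - {e}) y') else 0)"
      by (intro sum.cong refl) (simp add: Om_Cons)
    also have "\<dots> = (\<Sum>e\<in>W. gq q c y0 a e * (mq q ^ rk W e * Om q (W - {e}) y'))"
      using Suc.prems(2) by (simp add: sum.If_cases Int_absorb1)
    also have "\<dots> = h y"
      unfolding h_def yy(1)
    proof (intro sum.cong refl)
      fix e assume "e \<in> W"
      have "(\<Sum>f<d. mq q ^ rk W e * gq q c f a e * psiT f (Om q (W - {e})) (y0 # y'))
          = (\<Sum>f<d. if f = y0 then mq q ^ rk W e * gq q c f a e * Om q (W - {e}) y' else 0)"
        by (intro sum.cong refl) auto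
      also have "\<dots> = mq q ^ rk W e * gq q c y0 a e * Om q (W - {e}) y'"
        using yy(2) by (subst sum.delta) auto
      finally show "gq q c y0 a e * (mq q ^ rk W e * Om q (W - {e}) y')
          = (\<Sum>f<d. mq q ^ rk W e * gq q c f a e * psiT f (Om q (W - {e})) (y0 # y'))"
        by (simp add: algebra_simps)
    qed
    finally show ?thesis .
  qed
  have "Gs d q (Suc n) ?v z = ?v z + Gs d q n ?g (tl z)"
    using Gs_Suc[OF Suc.prems(4)] by simp
  also have "Gs d q n ?g (tl z) = Gs d q n h t"
  proof -
    have "Gs d q n ?g t = Gs d q n h t" by (rule Gs_cong[OF z(3)]) (rule hy)
    then show ?thesis using z(1) by simp
  qed
  also have "\<dots> = (\<Sum>e\<in>W. \<Sum>f<d. (mq q ^ rk W e * gq q c f a e) * Gs d q n (psiT f (Om q (W - {e}))) t)"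
    unfolding h_def by (simp only: Gs_sum Gs_smult)
  also have "\<dots> = (\<Sum>e\<in>W. mq q ^ rk W e * (\<Sum>f<d. gq q c f a e * X e f))"
  proof (intro sum.cong refl)
    fix e assume e: "e \<in> W"
    have "Gs d q n (psiT f (Om q (W - {e}))) t = X e f" if "f < d" for f
    proof -
      have sub: "W - {e} \<subseteq> {..<d}" using Suc.prems(2) by auto
      have cd: "card (W - {e}) = n" using Suc.prems(3) fW e by simp
      show ?thesis unfolding X_def using Suc.IH[OF that sub cd z(3)] by simp
    qed
    then show "(\<Sum>f<d. (mq q ^ rk W e * gq q c f a e) * Gs d q n (psiT f (Om q (W - {e}))) t)
        = mq q ^ rk W e * (\<Sum>f<d. gq q c f a e * X e f)"
      by (simp add: sum_distrib_left mult.assoc)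
  qed
  finally have "Gs d q (Suc n) ?v z = (if c = a then Om q W t else 0)
      + (\<Sum>e\<in>W. mq q ^ rk W e * (\<Sum>f<d. gq q c f a e * X e f))"
    using z(1) by simp
  also have "\<dots> = (if a \<in> W then 0 else mq q ^ rk W a * Om q (insert a W) (c # t))"
    by (rule final_id[OF q fW Suc.prems(2) Suc.prems(1)]) (simp add: X_def)
  finally show ?case using z(1) by simp
qed

definition Tk :: "real \<Rightarrow> nat list \<Rightarrow> nat list \<Rightarrow> complex" where
  "Tk q z x = (if distinct x then mq q ^ inversions x * Om q (set x) z else 0)"

lemma Aw_letters: "w \<in> set (Aw m) \<Longrightarrow> set w \<subseteq> {1..}"
proof (induction m arbitrary: w rule: Aw.induct)
  case 1 then show ?case by simp
next
  case 2 then show ?case by simp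
next
  case (3 m) then show ?case by auto
qed

lemma sum_list_concat': "sum_list (concat xss) = sum_list (map sum_list (xss :: complex list list))"
  by (induct xss) auto

lemma kapp_delta: "x \<in> idx d m \<Longrightarrow> kapp d m K (\<lambda>y. kid y x) z = K z x"
  unfolding kapp_def kid_def by (simp add: mult_if0' sum.delta)

lemma epsA_Suc_Suc:
  assumes "z \<in> idx d (Suc (Suc n))" and x: "x \<in> idx d (Suc (Suc n))"
  shows "epsA d q (Suc (Suc n)) z x =
    (\<Sum>i<Suc (Suc n). \<Sum>j<length (Aw (Suc n)).
        ap d q (Suc (Suc n)) (rev [1..<Suc i]) (ap d q (Suc (Suc n)) (map Suc (Aw (Suc n) ! j)) (\<lambda>y. kid y x)) z)"
proof -
  let ?L = "Aw (Suc n)"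
  have "epsA d q (Suc (Suc n)) z x = sum_list (map (\<lambda>w. ap d q (Suc (Suc n)) w (\<lambda>y. kid y x) z) (Aw (Suc (Suc n))))"
    unfolding epsA_def using assms
    by (intro arg_cong[where f=sum_list] map_cong refl) (simp add: kapp_epsw[symmetric] kapp_delta)
  also have "\<dots> = (\<Sum>i<Suc (Suc n). sum_list (map (\<lambda>w. ap d q (Suc (Suc n)) (rev [1..<Suc i] @ map Suc w) (\<lambda>y. kid y x) z) ?L))"
    by (simp only: Aw.simps map_concat sum_list_concat' map_map o_def
        interv_sum_list_conv_sum_set_nat set_upt atLeast0LessThan)
  also have "\<dots> = (\<Sum>i<Suc (Suc n). \<Sum>j<length ?L.
        ap d q (Suc (Suc n)) (rev [1..<Suc i]) (ap d q (Suc (Suc n)) (map Suc (?L ! j)) (\<lambda>y. kid y x)) z)"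
    by (simp add: sum_list_sum_nth atLeast0LessThan ap_append)
  finally show ?thesis .
qed

lemma inv_Cons_distinct: "distinct (a # x) \<Longrightarrow> inversions (a # x) = rk (set x) a + inversions x"
  by (simp add: inv_Cons len_filter_distinct rk_def)

lemma EA:
  assumes q: "q \<ge> 0"
  shows "z \<in> idx d m \<Longrightarrow> x \<in> idx d m \<Longrightarrow> epsA d q m z x = Tk q z x"
proof (induction m arbitrary: z x rule: Aw.induct)
  case 1
  then have "z = []" "x = []" by (auto simp: idx_def)
  then show ?case by (simp add: epsA_def Tk_def kid_def)
next
  case 2
  then obtain a b where "x = [a]" "z = [b]"
    by (auto simp: idx_def length_Suc_conv)
  moreover have "rk {a} a = 0" unfolding rk_def by auto
  ultimately show ?case
    by (simp add: epsA_def Tk_def kid_def Om_Cons inv_Cons)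
next
  case (3 n)
  let ?m = "Suc (Suc n)"
  let ?L = "Aw (Suc n)"
  obtain x0 x' where x: "x = x0 # x'" "x0 < d" "x' \<in> idx d (Suc n)"
    using 3(3) by (cases x) (auto simp: idx_def)
  define C where "C = (if distinct x' then mq q ^ inversions x' else 0)"
  have inner: "(\<Sum>j<length ?L. ap d q ?m (map Suc (?L ! j)) (\<lambda>y. kid y x) y)
      = C * psiT x0 (Om q (set x')) y" if y: "y \<in> idx d ?m" for y
  proof -
    obtain y0 y' where yy: "y = y0 # y'" "y' \<in> idx d (Suc n)"
      using y by (cases y) (auto simp: idx_def)
    have "(\<Sum>j<length ?L. ap d q ?m (map Suc (?L ! j)) (\<lambda>y. kid y x) y)
        = (\<Sum>j<length ?L. ap d q (Suc n) (?L ! j) (\<lambda>u. (if y0 = x0 then 1 else 0) * kid u x') y')"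
    proof (intro sum.cong refl)
      fix j assume "j \<in> {..<length ?L}"
      then have "set (?L ! j) \<subseteq> {1..}" by (intro Aw_letters[of _ "Suc n"]) simp
      then show "ap d q ?m (map Suc (?L ! j)) (\<lambda>y. kid y x) y
          = ap d q (Suc n) (?L ! j) (\<lambda>u. (if y0 = x0 then 1 else 0) * kid u x') y'"
        using ap_shift[of "?L ! j" y d "Suc n" q "\<lambda>y. kid y x"] y yy x(1)
        by (simp add: kid_def)
    qed
    also have "\<dots> = (if y0 = x0 then 1 else 0) * (\<Sum>j<length ?L. epsw d q (Suc n) (?L ! j) y' x')"
      by (simp add: ap_smult sum_distrib_left kapp_epsw[OF yy(2), symmetric] kapp_delta[OF x(3)])
    also have "(\<Sum>j<length ?L. epsw d q (Suc n) (?L ! j) y' x') = epsA d q (Suc n) y' x'"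
      unfolding epsA_def by (simp add: sum_list_sum_nth atLeast0LessThan)
    also have "\<dots> = Tk q y' x'" by (rule 3(1)[of 0, OF _ yy(2) x(3)]) auto
    finally show ?thesis unfolding yy(1) by (simp add: Tk_def C_def)
  qed
  have "epsA d q ?m z x = (\<Sum>i<?m. ap d q ?m (rev [1..<Suc i])
          (\<lambda>y. \<Sum>j<length ?L. ap d q ?m (map Suc (?L ! j)) (\<lambda>y. kid y x) y) z)"
    by (simp add: epsA_Suc_Suc[OF 3(2,3)] ap_sum)
  also have "\<dots> = (\<Sum>i<?m. ap d q ?m (rev [1..<Suc i]) (\<lambda>y. C * psiT x0 (Om q (set x')) y) z)"
    by (intro sum.cong refl ap_cong[OF 3(2)] inner)
  also have "\<dots> = C * Gs d q (Suc n) (psiT x0 (Om q (set x'))) z"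
    unfolding Gs_def ap_smult by (simp only: lessThan_Suc_atMost sum_distrib_left)
  also have "\<dots> = Tk q z x"
  proof (cases "distinct x'")
    case True
    have cx: "card (set x') = Suc n" using True x(3) by (simp add: distinct_card idx_def)
    have sx: "set x' \<subseteq> {..<d}" using x(3) by (auto simp: idx_def)
    show ?thesis
      using GL[OF q x(2) sx cx 3(2)] True x(1)
      by (simp add: C_def Tk_def inv_Cons_distinct power_add algebra_simps)
  next
    case False
    then show ?thesis by (simp add: C_def Tk_def x(1))
  qed
  finally show ?case .
qed

lemma Tk_alt: "Tk q z x = (if distinct x \<and> distinct z \<and> set z = set x then mq q ^ (inversions x + inversions z) else 0)"
  by (auto simp: Tk_def Om_def power_add)

lemma Tk_sym: "Tk q z x = (if distinct z then mq q ^ inversions z * Om q (set z) x else 0)"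
  by (auto simp: Tk_alt Om_def power_add)

lemma Om_append: "Om q D (x @ m) = (if distinct x \<and> distinct m \<and> set x \<inter> set m = {} \<and> set x \<union> set m = D
    then mq q ^ (inversions x + inversions m + crs (set x) (set m)) else 0)"
  by (auto simp: Om_def inv_append crossl_crs)

lemma cnj_mq: "cnj (mq q) = mq q" by (simp add: mq_def)

lemma cnj_Om: "cnj (Om q W y) = Om q W y" by (simp add: Om_def cnj_mq)

lemma P1core:
  assumes q: "q \<ge> 0" and k: "k \<le> d" and x: "x \<in> idx d k" and z: "z \<in> idx d k"
  shows "(\<Sum>m\<in>idx d (d - k). Om q {..<d} (x @ m) * Om q {..<d} (m @ z))
     = complex_of_real (qfact q (d - k)) * mq q ^ (k * (d - k)) * Tk q z x"
proof (cases "distinct x \<and> distinct z \<and> set x = set z")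
  case False
  have z0: "Om q {..<d} (x @ m) * Om q {..<d} (m @ z) = 0" for m
  proof (rule ccontr)
    assume "Om q {..<d} (x @ m) * Om q {..<d} (m @ z) \<noteq> 0"
    then have h1: "distinct x \<and> distinct m \<and> set x \<inter> set m = {} \<and> set x \<union> set m = {..<d}"
         and h2: "distinct m \<and> distinct z \<and> set m \<inter> set z = {} \<and> set m \<union> set z = {..<d}"
      by (auto simp: Om_append split: if_splits)
    then have "set x = set z" by blast
    with h1 h2 False show False by simp
  qed
  have "Tk q z x = 0" using False by (auto simp: Tk_alt)
  then show ?thesis by (simp only: z0) simp
next
  case True
  let ?X = "set x" and ?C = "{..<d} - set x"
  have Xd: "?X \<subseteq> {..<d}" using x by (auto simp: idx_def)
  have dx: "distinct x" using True by simp
  have cX: "card ?X = k" using dx x by (simp add: distinct_card idx_def)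
  have cC: "card ?C = d - k" using Xd cX by (simp add: card_Diff_subset finite_subset)
  have cs: "crs ?X ?C + crs ?C ?X = k * (d - k)"
    using crs_sym[of ?X ?C] cX cC by auto
  have tm: "Om q {..<d} (x @ m) * Om q {..<d} (m @ z)
      = mq q ^ (inversions x + inversions z + k * (d - k)) * (Om q ?C m * Om q ?C m)" for m
  proof (cases "distinct m \<and> set m = ?C")
    case True2: True
    have "set m \<inter> set z = {}" "set m \<union> set z = {..<d}" "set x \<inter> set m = {}" "set x \<union> set m = {..<d}"
      using True True2 Xd by auto
    have sz: "set z = ?X" using True by simp
    have e1: "Om q {..<d} (x @ m) = mq q ^ (inversions x + inversions m + crs ?X ?C)"
      using True True2 \<open>set x \<inter> set m = {}\<close> \<open>set x \<union> set m = {..<d}\<close> by (simp add: Om_append)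
    have e2: "Om q {..<d} (m @ z) = mq q ^ (inversions m + inversions z + crs ?C ?X)"
      using True True2 \<open>set m \<inter> set z = {}\<close> \<open>set m \<union> set z = {..<d}\<close>
      by (simp add: Om_append sz)
    have e3: "Om q ?C m = mq q ^ inversions m" using True2 by (simp add: Om_def)
    have ex: "(inversions x + inversions m + crs ?X ?C) + (inversions m + inversions z + crs ?C ?X)
        = (inversions x + inversions z + k * (d - k)) + (inversions m + inversions m)"
      using cs by simp
    show ?thesis
      by (simp only: e1 e2 e3 power_add[symmetric] ex)
  next
    case False2: False
    have o1: "Om q {..<d} (x @ m) = 0"
      using False2 by (auto simp: Om_append)
    have o2: "Om q ?C m = 0" unfolding Om_def by (rule if_not_P[OF False2])
    show ?thesis by (simp only: o1 o2) simp
  qed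
  have "(\<Sum>m\<in>idx d (d - k). Om q {..<d} (x @ m) * Om q {..<d} (m @ z))
      = mq q ^ (inversions x + inversions z + k * (d - k)) * (\<Sum>m\<in>idx d (d - k). Om q ?C m * Om q ?C m)"
    by (simp add: tm sum_distrib_left)
  also have "\<dots> = mq q ^ (inversions x + inversions z + k * (d - k)) * complex_of_real (qfact q (d - k))"
    using perm_sum[OF q, of ?C d "d - k"] cC by auto
  finally show ?thesis using True by (simp add: Tk_alt power_add algebra_simps)
qed

lemma P1:
  assumes q: "q \<ge> 0" and k: "k \<le> d" and x: "x \<in> idx d k" and z: "z \<in> idx d k"
    and u: "u = (\<lambda>y. \<alpha> * Svec d q y)" and v: "v = (\<lambda>y. \<beta> * Svec d q y)"
  shows "kcomp d (k + d) (ktens 0 d (kadj (vk u)) kid) (ktens k k kid (vk v)) z x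
     = cnj \<alpha> * \<beta> * (complex_of_real (qfact q (d - k)) * mq q ^ (k * (d - k)) * Tk q z x)"
proof -
  let ?S = "Om q {..<d}"
  define F where "F y = cnj (u (take d y)) * (if z = drop d y then 1 else 0)
      * ((if take k y = x then 1 else 0) * v (drop k y))" for y
  have lx: "length x = k" using x by (simp add: idx_def)
  have "kcomp d (k + d) (ktens 0 d (kadj (vk u)) kid) (ktens k k kid (vk v)) z x
      = (\<Sum>y\<in>idx d (k + d). F y)"
    unfolding kcomp_def ktens_def kadj_def vk_def kid_def F_def using lx by simp
  also have "\<dots> = (\<Sum>x1\<in>idx d k. \<Sum>m\<in>idx d (d - k). \<Sum>z1\<in>idx d k. F (x1 @ m @ z1))"
  proof -
    have kd: "k + d = k + ((d - k) + k)" using k by simp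
    show ?thesis unfolding kd sum_idx_append by simp
  qed
  also have "\<dots> = (\<Sum>x1\<in>idx d k. \<Sum>m\<in>idx d (d - k). \<Sum>z1\<in>idx d k.
      if x1 = x then (if z1 = z then cnj \<alpha> * \<beta> * (?S (x @ m) * ?S (m @ z)) else 0) else 0)"
  proof (intro sum.cong refl)
    fix x1 m z1 assume x1: "x1 \<in> idx d k" and m: "m \<in> idx d (d - k)" and z1: "z1 \<in> idx d k"
    have l: "length x1 = k" "length m = d - k" "length z1 = k" using x1 m z1 by (auto simp: idx_def)
    have t1: "take d (x1 @ m @ z1) = x1 @ m" using l k by simp
    have t2: "drop d (x1 @ m @ z1) = z1" using l k by simp
    have t3: "take k (x1 @ m @ z1) = x1" using l by simp
    have t4: "drop k (x1 @ m @ z1) = m @ z1" using l by simp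
    show "F (x1 @ m @ z1) = (if x1 = x then (if z1 = z then cnj \<alpha> * \<beta> * (?S (x @ m) * ?S (m @ z)) else 0) else 0)"
      unfolding F_def t1 t2 t3 t4 u v by (simp add: Svec_Om cnj_Om)
  qed
  also have "\<dots> = cnj \<alpha> * \<beta> * (\<Sum>m\<in>idx d (d - k). ?S (x @ m) * ?S (m @ z))"
    using x z by (simp add: sum_if_out sum.delta sum_distrib_left)
  also have "\<dots> = cnj \<alpha> * \<beta> * (complex_of_real (qfact q (d - k)) * mq q ^ (k * (d - k)) * Tk q z x)"
    by (simp only: P1core[OF q k x z])
  finally show ?thesis .
qed

lemma Om3:
  "Om q Z1 x1 * Om q Z2 x2 * Om q D (x1 @ x2) =
   (if Z1 \<inter> Z2 = {} \<and> Z1 \<union> Z2 = D then mq q ^ crs Z1 Z2 * (Om q Z1 x1 * Om q Z1 x1) * (Om q Z2 x2 * Om q Z2 x2) else 0)"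
proof (cases "distinct x1 \<and> set x1 = Z1 \<and> distinct x2 \<and> set x2 = Z2")
  case True
  have o1: "Om q Z1 x1 = mq q ^ inversions x1" using True by (simp add: Om_def)
  have o2: "Om q Z2 x2 = mq q ^ inversions x2" using True by (simp add: Om_def)
  show ?thesis by (simp only: o1 o2 Om_append) (use True in \<open>auto simp: power_add\<close>)
next
  case False
  then have "Om q Z1 x1 = 0 \<or> Om q Z2 x2 = 0" by (auto simp: Om_def)
  then show ?thesis by auto
qed

lemma epsE_Tk: "q \<ge> 0 \<Longrightarrow> z \<in> idx d m \<Longrightarrow> x \<in> idx d m \<Longrightarrow> epsE d q m z x = Tk q z x / complex_of_real (qfact q m)"
  by (simp add: epsE_def EA)

lemma P2:
  assumes q: "q > 0" and ab: "a + b = d" and z: "z \<in> idx d d"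
  shows "kapp d d (ktens a a (epsE d q a) (epsE d q b)) (Svec d q) z = Svec d q z"
proof -
  let ?z1 = "take a z" and ?z2 = "drop a z"
  let ?D = "{..<d}"
  have z1: "?z1 \<in> idx d a" and z2: "?z2 \<in> idx d b" using z ab
    by (auto simp: idx_def dest: in_set_takeD in_set_dropD)
  have qa: "qfact q a \<noteq> 0" "qfact q b \<noteq> 0" using qfact_pos[OF q] by (auto simp: less_imp_neq[symmetric])
  have "kapp d d (ktens a a (epsE d q a) (epsE d q b)) (Svec d q) z
      = (\<Sum>x1\<in>idx d a. \<Sum>x2\<in>idx d b. epsE d q a ?z1 x1 * epsE d q b ?z2 x2 * Om q ?D (x1 @ x2))"
  proof -
    have "kapp d d (ktens a a (epsE d q a) (epsE d q b)) (Svec d q) z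
       = (\<Sum>x\<in>idx d (a + b). ktens a a (epsE d q a) (epsE d q b) z x * Svec d q x)"
      unfolding kapp_def ab ..
    also have "\<dots> = (\<Sum>x1\<in>idx d a. \<Sum>x2\<in>idx d b. ktens a a (epsE d q a) (epsE d q b) z (x1 @ x2) * Svec d q (x1 @ x2))"
      by (rule sum_idx_append)
    also have "\<dots> = (\<Sum>x1\<in>idx d a. \<Sum>x2\<in>idx d b. epsE d q a ?z1 x1 * epsE d q b ?z2 x2 * Om q ?D (x1 @ x2))"
      by (intro sum.cong refl) (auto simp: ktens_def Svec_Om idx_def)
    finally show ?thesis .
  qed
  also have "\<dots> = Svec d q z"
  proof (cases "distinct ?z1 \<and> distinct ?z2")
    case False
    then have t0: "Tk q ?z1 x1 * Tk q ?z2 x2 = 0" for x1 x2 by (auto simp: Tk_sym)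
    have t1: "epsE d q a ?z1 x1 * epsE d q b ?z2 x2 * Om q ?D (x1 @ x2) = 0"
      if "x1 \<in> idx d a" "x2 \<in> idx d b" for x1 x2
    proof -
      have "epsE d q a ?z1 x1 * epsE d q b ?z2 x2 = Tk q ?z1 x1 * Tk q ?z2 x2 / (complex_of_real (qfact q a) * complex_of_real (qfact q b))"
        using q that by (simp add: epsE_Tk z1 z2)
      then show ?thesis using t0[of x1 x2] by simp
    qed
    moreover have "Svec d q z = 0"
    proof -
      have "Svec d q z = Om q ?D (?z1 @ ?z2)" by (simp add: Svec_Om)
      also have "\<dots> = 0" by (simp only: Om_append) (use False in auto)
      finally show ?thesis .
    qed
    moreover have "(\<Sum>x1\<in>idx d a. \<Sum>x2\<in>idx d b. epsE d q a ?z1 x1 * epsE d q b ?z2 x2 * Om q ?D (x1 @ x2)) = 0"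
      by (intro sum.neutral ballI t1)
    ultimately show ?thesis by simp
  next
    case True
    let ?Z1 = "set ?z1" and ?Z2 = "set ?z2"
    let ?c = "if ?Z1 \<inter> ?Z2 = {} \<and> ?Z1 \<union> ?Z2 = ?D then mq q ^ crs ?Z1 ?Z2 else 0"
    have cZ1: "card ?Z1 = a" using True z1 by (simp add: distinct_card idx_def)
    have cZ2: "card ?Z2 = b" using True z2 by (simp add: distinct_card idx_def)
    have sZ1: "?Z1 \<subseteq> ?D" using z1 by (auto simp: idx_def)
    have sZ2: "?Z2 \<subseteq> ?D" using z2 by (auto simp: idx_def)
    have tm: "epsE d q a ?z1 x1 * epsE d q b ?z2 x2 * Om q ?D (x1 @ x2)
        = (mq q ^ inversions ?z1 * mq q ^ inversions ?z2 / (complex_of_real (qfact q a) * complex_of_real (qfact q b)) * ?c)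
          * ((Om q ?Z1 x1 * Om q ?Z1 x1) * (Om q ?Z2 x2 * Om q ?Z2 x2))"
      if "x1 \<in> idx d a" "x2 \<in> idx d b" for x1 x2
    proof -
      have "epsE d q a ?z1 x1 * epsE d q b ?z2 x2 * Om q ?D (x1 @ x2)
          = mq q ^ inversions ?z1 * mq q ^ inversions ?z2 / (complex_of_real (qfact q a) * complex_of_real (qfact q b))
            * (Om q ?Z1 x1 * Om q ?Z2 x2 * Om q ?D (x1 @ x2))"
        using True q that by (simp add: epsE_Tk z1 z2 Tk_sym)
      also have "\<dots> = (mq q ^ inversions ?z1 * mq q ^ inversions ?z2 / (complex_of_real (qfact q a) * complex_of_real (qfact q b)) * ?c)
          * ((Om q ?Z1 x1 * Om q ?Z1 x1) * (Om q ?Z2 x2 * Om q ?Z2 x2))"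
        by (simp only: Om3) simp
      finally show ?thesis .
    qed
    have "(\<Sum>x1\<in>idx d a. \<Sum>x2\<in>idx d b. epsE d q a ?z1 x1 * epsE d q b ?z2 x2 * Om q ?D (x1 @ x2))
        = (mq q ^ inversions ?z1 * mq q ^ inversions ?z2 / (complex_of_real (qfact q a) * complex_of_real (qfact q b)) * ?c)
          * ((\<Sum>x1\<in>idx d a. Om q ?Z1 x1 * Om q ?Z1 x1) * (\<Sum>x2\<in>idx d b. Om q ?Z2 x2 * Om q ?Z2 x2))"
    proof -
      have "(\<Sum>x1\<in>idx d a. \<Sum>x2\<in>idx d b. epsE d q a ?z1 x1 * epsE d q b ?z2 x2 * Om q ?D (x1 @ x2))
        = (\<Sum>x1\<in>idx d a. \<Sum>x2\<in>idx d b. (mq q ^ inversions ?z1 * mq q ^ inversions ?z2 / (complex_of_real (qfact q a) * complex_of_real (qfact q b)) * ?c)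
          * ((Om q ?Z1 x1 * Om q ?Z1 x1) * (Om q ?Z2 x2 * Om q ?Z2 x2)))"
        by (intro sum.cong refl tm)
      then show ?thesis unfolding sum_product by (simp only: sum_distrib_left)
    qed
    also have "\<dots> = mq q ^ inversions ?z1 * mq q ^ inversions ?z2 * ?c"
      using perm_sum[OF less_imp_le[OF q] sZ1 cZ1] perm_sum[OF less_imp_le[OF q] sZ2 cZ2] qa by simp
    also have "\<dots> = Om q ?D (?z1 @ ?z2)"
      by (simp only: Om_append) (use True in \<open>auto simp: power_add\<close>)
    also have "\<dots> = Svec d q z" by (simp add: Svec_Om)
    finally show ?thesis .
  qed
  finally show ?thesis .
qed

lemma scal_real:
  assumes s: "s > 0" and A: "A > 0" and B: "B > 0"
    and r: "r = 1 / (s powr (real N / 2) * sqrt A * sqrt B)"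
  shows "r * r * s ^ N = 1 / (A * B)"
proof -
  have p: "s powr (real N / 2) * s powr (real N / 2) = s ^ N"
    using s by (simp add: powr_add[symmetric] powr_realpow)
  have "r * r = 1 / ((s powr (real N / 2) * s powr (real N / 2)) * (sqrt A * sqrt A) * (sqrt B * sqrt B))"
    unfolding r by (simp add: field_simps)
  also have "\<dots> = 1 / (s ^ N * A * B)" using A B by (simp add: p)
  finally show ?thesis using s by (simp add: field_simps)
qed

lemma mq_signed: "(-1) ^ N * mq q ^ N = complex_of_real (sqrt q ^ N)"
  by (simp add: mq_def power_mult_distrib[symmetric])

theorem lemma5p6:
  fixes d k :: nat and q :: real
  assumes "q > 0" and "1 \<le> k" and "k < d"
  shows
   "(\<forall>z\<in>idx d k. \<forall>x\<in>idx d k.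
       kcomp d (k + d) (ktens 0 d (kadj (vk (Svec d q))) kid) (ktens k k kid (vk (Svec d q))) z x
       = complex_of_real (qfact q (d - k) * qfact q k) * (- complex_of_real (sqrt q)) ^ (k * (d - k))
         * epsE d q k z x)
    \<and> (\<exists>v. \<forall>z\<in>idx d d. Rvec d q k z = kapp d d (ktens (d - k) (d - k) (epsE d q (d - k)) (epsE d q k)) v z)
    \<and> (\<exists>v. \<forall>z\<in>idx d d. Rbar d q k z = kapp d d (ktens k k (epsE d q k) (epsE d q (d - k))) v z)
    \<and> (\<forall>z\<in>idx d k. \<forall>x\<in>idx d k.
       kcomp d (k + d) (ktens 0 d (kadj (vk (Rbar d q k))) kid) (ktens k k kid (vk (Rvec d q k))) z x
       = epsE d q k z x)
    \<and> (\<forall>z\<in>idx d (d - k). \<forall>x\<in>idx d (d - k).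
       kcomp d ((d - k) + d) (ktens 0 d (kadj (vk (Rvec d q k))) kid) (ktens (d - k) (d - k) kid (vk (Rbar d q k))) z x
       = epsE d q (d - k) z x)"
proof -
  have q: "q > 0" and q0: "q \<ge> 0" using assms(1) by auto
  define N where "N = k * (d - k)"
  define r where "r = 1 / (sqrt q powr (real N / 2) * sqrt (qfact q k) * sqrt (qfact q (d - k)))"
  define c where "c = complex_of_real r"
  have A: "qfact q k > 0" and B: "qfact q (d - k) > 0" using qfact_pos[OF q] by auto
  have rr: "r * r * sqrt q ^ N = 1 / (qfact q k * qfact q (d - k))"
    by (rule scal_real[OF _ A B r_def]) (use q in simp)
  have Rv: "Rvec d q k = (\<lambda>y. c * Svec d q y)"
    by (rule ext) (simp add: Rvec_def c_def r_def N_def)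
  have Rb: "Rbar d q k = (\<lambda>y. ((-1) ^ N * c) * Svec d q y)"
    by (rule ext) (simp add: Rbar_def Rv N_def)
  have cc: "cnj c = c" by (simp add: c_def)
  have cs: "c * c * ((-1) ^ N * mq q ^ N) = 1 / (complex_of_real (qfact q k) * complex_of_real (qfact q (d - k)))"
  proof -
    have "c * c * ((-1) ^ N * mq q ^ N) = complex_of_real (r * r * sqrt q ^ N)"
      by (simp add: mq_signed c_def)
    also have "\<dots> = 1 / (complex_of_real (qfact q k) * complex_of_real (qfact q (d - k)))"
      by (simp add: rr)
    finally show ?thesis .
  qed
  have kd: "k \<le> d" "d - k \<le> d" "d - (d - k) = k" using assms by auto
  have part1: "\<forall>z\<in>idx d k. \<forall>x\<in>idx d k.
       kcomp d (k + d) (ktens 0 d (kadj (vk (Svec d q))) kid) (ktens k k kid (vk (Svec d q))) z x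
       = complex_of_real (qfact q (d - k) * qfact q k) * (- complex_of_real (sqrt q)) ^ (k * (d - k))
         * epsE d q k z x"
  proof (intro ballI)
    fix z x assume z: "z \<in> idx d k" and x: "x \<in> idx d k"
    have "kcomp d (k + d) (ktens 0 d (kadj (vk (Svec d q))) kid) (ktens k k kid (vk (Svec d q))) z x
        = cnj 1 * 1 * (complex_of_real (qfact q (d - k)) * mq q ^ (k * (d - k)) * Tk q z x)"
      by (rule P1[OF q0 kd(1) x z]) simp_all
    then show "kcomp d (k + d) (ktens 0 d (kadj (vk (Svec d q))) kid) (ktens k k kid (vk (Svec d q))) z x
       = complex_of_real (qfact q (d - k) * qfact q k) * (- complex_of_real (sqrt q)) ^ (k * (d - k))
         * epsE d q k z x"
      using A by (simp add: epsE_Tk[OF q0 z x] mq_def)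
  qed
  have part2: "\<exists>v. \<forall>z\<in>idx d d. Rvec d q k z = kapp d d (ktens (d - k) (d - k) (epsE d q (d - k)) (epsE d q k)) v z"
  proof (intro exI ballI)
    fix z assume z: "z \<in> idx d d"
    show "Rvec d q k z = kapp d d (ktens (d - k) (d - k) (epsE d q (d - k)) (epsE d q k)) (Rvec d q k) z"
      unfolding Rv kapp_smult using P2[OF q _ z, of "d - k" k] kd by simp
  qed
  have part3: "\<exists>v. \<forall>z\<in>idx d d. Rbar d q k z = kapp d d (ktens k k (epsE d q k) (epsE d q (d - k))) v z"
  proof (intro exI ballI)
    fix z assume z: "z \<in> idx d d"
    show "Rbar d q k z = kapp d d (ktens k k (epsE d q k) (epsE d q (d - k))) (Rbar d q k) z"
      unfolding Rb kapp_smult using P2[OF q _ z, of k "d - k"] kd by simp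
  qed
  have part4: "\<forall>z\<in>idx d k. \<forall>x\<in>idx d k.
       kcomp d (k + d) (ktens 0 d (kadj (vk (Rbar d q k))) kid) (ktens k k kid (vk (Rvec d q k))) z x
       = epsE d q k z x"
  proof (intro ballI)
    fix z x assume z: "z \<in> idx d k" and x: "x \<in> idx d k"
    have "kcomp d (k + d) (ktens 0 d (kadj (vk (Rbar d q k))) kid) (ktens k k kid (vk (Rvec d q k))) z x
        = cnj ((-1) ^ N * c) * c * (complex_of_real (qfact q (d - k)) * mq q ^ (k * (d - k)) * Tk q z x)"
      by (rule P1[OF q0 kd(1) x z Rb Rv])
    also have "\<dots> = (c * c * ((-1) ^ N * mq q ^ N)) * complex_of_real (qfact q (d - k)) * Tk q z x"
      by (simp add: cc N_def algebra_simps)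
    also have "\<dots> = epsE d q k z x"
      unfolding cs using B by (simp add: epsE_Tk[OF q0 z x])
    finally show "kcomp d (k + d) (ktens 0 d (kadj (vk (Rbar d q k))) kid) (ktens k k kid (vk (Rvec d q k))) z x
       = epsE d q k z x" .
  qed
  have part5: "\<forall>z\<in>idx d (d - k). \<forall>x\<in>idx d (d - k).
       kcomp d ((d - k) + d) (ktens 0 d (kadj (vk (Rvec d q k))) kid) (ktens (d - k) (d - k) kid (vk (Rbar d q k))) z x
       = epsE d q (d - k) z x"
  proof (intro ballI)
    fix z x assume z: "z \<in> idx d (d - k)" and x: "x \<in> idx d (d - k)"
    have "kcomp d ((d - k) + d) (ktens 0 d (kadj (vk (Rvec d q k))) kid) (ktens (d - k) (d - k) kid (vk (Rbar d q k))) z x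
        = cnj c * ((-1) ^ N * c) * (complex_of_real (qfact q (d - (d - k))) * mq q ^ ((d - k) * (d - (d - k))) * Tk q z x)"
      by (rule P1[OF q0 kd(2) x z Rv Rb])
    also have "\<dots> = (c * c * ((-1) ^ N * mq q ^ N)) * complex_of_real (qfact q k) * Tk q z x"
      by (simp add: cc N_def kd(3) algebra_simps)
    also have "\<dots> = epsE d q (d - k) z x"
      unfolding cs using A by (simp add: epsE_Tk[OF q0 z x])
    finally show "kcomp d ((d - k) + d) (ktens 0 d (kadj (vk (Rvec d q k))) kid) (ktens (d - k) (d - k) kid (vk (Rbar d q k))) z x
       = epsE d q (d - k) z x" .
  qed
  show ?thesis using part1 part2 part3 part4 part5 by blast
qed

end
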